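(* If $w$ is an infinite word over a finite alphabet $A$ and $H$ is a graph on $A$ with loops allowed, then the class $\mathcal{P}(w,H)$ is above the Bell number.
   Context: Words over $A$ are maps $w:S\to A$ with $S=\{1,\dots,n\}$ or $\mathbb{N}$, $w_i=w(i)$. For positive integers $u_1<\dots<u_m$, $G_{w,H}(u_1,\dots,u_m)$ is the graph on $\{u_1,\dots,u_m\}$ in which $u_iu_j$ is an edge iff ($|u_i-u_j|=1$ and $w_{u_i}w_{u_j}\notin E(H)$) or ($|u_i-u_j|>1$ and $w_{u_i}w_{u_j}\in E(H)$) (for equal letters $a$ this refers to a loop at $a$). $\mathcal{P}(w,H)$ is the hereditary class of all graphs isomorphic to some $G_{w,H}(u_1,\dots,u_m)$. A hereditary class is above the Bell number if the number of its graphs on vertex set $\{1,\dots,n\}$ is at least $n^{(1-o(1))n}$ (equivalently, at least the Bell number $B_n$). *)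

theory Defs
  imports Complex_Main
begin

text \<open>A word is a map from positions to letters; for an infinite word we use
  w :: nat => 'a and only positions >= 1 are ever used.
  A graph H on the alphabet A with loops allowed is a symmetric relation E on A
  (E a a means a loop at a).\<close>

definition adjacent_pos :: "nat \<Rightarrow> nat \<Rightarrow> bool" where
  "adjacent_pos u v \<longleftrightarrow> u = v + 1 \<or> v = u + 1"

definition GwH_edges :: "(nat \<Rightarrow> 'a) \<Rightarrow> ('a \<Rightarrow> 'a \<Rightarrow> bool) \<Rightarrow> nat set \<Rightarrow> nat set set" where
  "GwH_edges w E U = {{u, v} | u v. u \<in> U \<and> v \<in> U \<and> u \<noteq> v \<and>
      ((adjacent_pos u v \<and> \<not> E (w u) (w v)) \<or> (\<not> adjacent_pos u v \<and> E (w u) (w v)))}"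

definition graphs_on :: "'v set \<Rightarrow> 'v set set set" where
  "graphs_on V = {G. G \<subseteq> {{i, j} | i j. i \<in> V \<and> j \<in> V \<and> i \<noteq> j}}"

definition graph_iso :: "'v set \<Rightarrow> 'v set set \<Rightarrow> 'u set \<Rightarrow> 'u set set \<Rightarrow> bool" where
  "graph_iso V G U F \<longleftrightarrow> (\<exists>f. bij_betw f V U \<and>
      (\<forall>i\<in>V. \<forall>j\<in>V. i \<noteq> j \<longrightarrow> ({i, j} \<in> G \<longleftrightarrow> {f i, f j} \<in> F)))"

definition in_P :: "(nat \<Rightarrow> 'a) \<Rightarrow> ('a \<Rightarrow> 'a \<Rightarrow> bool) \<Rightarrow> 'v set \<Rightarrow> 'v set set \<Rightarrow> bool" where
  "in_P w E V G \<longleftrightarrow> (\<exists>U. finite U \<and> 0 \<notin> U \<and> graph_iso V G U (GwH_edges w E U))"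

definition speed_P :: "(nat \<Rightarrow> 'a) \<Rightarrow> ('a \<Rightarrow> 'a \<Rightarrow> bool) \<Rightarrow> nat \<Rightarrow> nat" where
  "speed_P w E n = card {G \<in> graphs_on {1..n}. in_P w E {1..n} G}"

definition above_Bell :: "(nat \<Rightarrow> nat) \<Rightarrow> bool" where
  "above_Bell s \<longleftrightarrow> (\<forall>\<epsilon>>0. \<forall>\<^sub>F n in sequentially.
      real (s n) \<ge> real n powr ((1 - \<epsilon>) * real n))"

end

theory Submission
  imports Defs "HOL-Combinatorics.Permutations"
begin

lemma pow_fact_le_exp: assumes "(x::real) \<ge> 0" shows "x^n / fact n \<le> exp x"
proof -
  have s: "(\<lambda>k. x^k /\<^sub>R fact k) sums exp x" by (rule exp_converges)
  have "sum (\<lambda>k. x^k /\<^sub>R fact k) {n} \<le> suminf (\<lambda>k. x^k /\<^sub>R fact k)"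
    by (rule sum_le_suminf) (use s assms in \<open>auto simp: sums_iff\<close>)
  then show ?thesis using s by (simp add: sums_iff divide_inverse mult.commute)
qed

lemma adj_sym: "adjacent_pos u v = adjacent_pos v u"
  by (auto simp: adjacent_pos_def)

lemma GwH_mem:
  assumes sym: "\<forall>a b. E a b \<longrightarrow> E b a" and "u \<in> U" "v \<in> U" "u \<noteq> v"
  shows "{u, v} \<in> GwH_edges w E U \<longleftrightarrow>
     ((adjacent_pos u v \<and> \<not> E (w u) (w v)) \<or> (\<not> adjacent_pos u v \<and> E (w u) (w v)))"
proof
  assume "{u, v} \<in> GwH_edges w E U"
  then obtain u' v' where e: "{u,v} = {u',v'}" and
    c: "(adjacent_pos u' v' \<and> \<not> E (w u') (w v')) \<or> (\<not> adjacent_pos u' v' \<and> E (w u') (w v'))"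
    unfolding GwH_edges_def by blast
  have Es: "E (w u) (w v) = E (w v) (w u)" using sym by blast
  from e have "(u = u' \<and> v = v') \<or> (u = v' \<and> v = u')" by (simp add: doubleton_eq_iff)
  then show "((adjacent_pos u v \<and> \<not> E (w u) (w v)) \<or> (\<not> adjacent_pos u v \<and> E (w u) (w v)))"
  proof
    assume "u = u' \<and> v = v'" then show ?thesis using c by simp
  next
    assume "u = v' \<and> v = u'" then show ?thesis using c Es adj_sym[of u v] by simp
  qed
next
  assume h: "((adjacent_pos u v \<and> \<not> E (w u) (w v)) \<or> (\<not> adjacent_pos u v \<and> E (w u) (w v)))"
  show "{u, v} \<in> GwH_edges w E U" unfolding GwH_edges_def mem_Collect_eq
    apply (rule exI[of _ u], rule exI[of _ v])
    using assms h by simp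
qed

definition pull :: "(nat \<Rightarrow> 'a) \<Rightarrow> ('a \<Rightarrow> 'a \<Rightarrow> bool) \<Rightarrow> nat \<Rightarrow> (nat \<Rightarrow> nat) \<Rightarrow> nat set set" where
  "pull w E n s = {{i, j} | i j. i \<in> {1..n} \<and> j \<in> {1..n} \<and> i \<noteq> j \<and> {s i, s j} \<in> GwH_edges w E {1..n}}"

lemma pull_mem:
  assumes "s permutes {1..n}" "i \<in> {1..n}" "j \<in> {1..n}" "i \<noteq> j"
  shows "{i, j} \<in> pull w E n s \<longleftrightarrow> {s i, s j} \<in> GwH_edges w E {1..n}"
proof
  assume "{i, j} \<in> pull w E n s"
  then obtain i' j' where e: "{i,j} = {i',j'}" and c: "{s i', s j'} \<in> GwH_edges w E {1..n}"
    unfolding pull_def by blast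
  from e have "(i = i' \<and> j = j') \<or> (i = j' \<and> j = i')" by (auto simp: doubleton_eq_iff)
  then show "{s i, s j} \<in> GwH_edges w E {1..n}" using c by (auto simp: insert_commute)
next
  assume "{s i, s j} \<in> GwH_edges w E {1..n}"
  then show "{i, j} \<in> pull w E n s" using assms unfolding pull_def by blast
qed

lemma perm_rigid:
  assumes s: "s permutes {1..n}" and t: "t permutes {1..n}"
    and adj: "\<And>i j. i \<in> {1..n} \<Longrightarrow> j \<in> {1..n} \<Longrightarrow> adjacent_pos (s i) (s j) = adjacent_pos (t i) (t j)"
    and one: "inv s 1 = inv t 1" and n: "n \<ge> 1"
  shows "s = t"
proof -
  have sinv: "s (inv s m) = m" for m using s by (simp add: permutes_inverses(1))
  have tinv: "t (inv t m) = m" for m using t by (simp add: permutes_inverses(1))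
  have invin: "inv s m \<in> {1..n}" if "m \<in> {1..n}" for m
    using that s by (metis permutes_inv permutes_in_image)
  have key: "\<forall>m'. 1 \<le> m' \<and> m' \<le> m \<and> m \<le> n \<longrightarrow> t (inv s m') = m'" for m
  proof (induction m)
    case 0 then show ?case by simp
  next
    case (Suc m)
    show ?case
    proof (intro allI impI)
      fix m' assume h: "1 \<le> m' \<and> m' \<le> Suc m \<and> Suc m \<le> n"
      show "t (inv s m') = m'"
      proof (cases "m' \<le> m")
        case True then show ?thesis using Suc.IH h by auto
      next
        case False
        then have m': "m' = Suc m" using h by auto
        show ?thesis
        proof (cases "m = 0")
          case True
          then show ?thesis using m' one tinv by simp
        next
          case False
          define i where "i = inv s m"
          define j where "j = inv s (Suc m)"
          have iV: "i \<in> {1..n}" using invin False h unfolding i_def by auto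
          have jV: "j \<in> {1..n}" using invin h m' unfolding j_def by auto
          have ti: "t i = m" using Suc.IH False h unfolding i_def by auto
          have "adjacent_pos (s i) (s j)" unfolding i_def j_def sinv adjacent_pos_def by simp
          then have "adjacent_pos (t i) (t j)" using adj iV jV by simp
          then have "t j = Suc m \<or> t j + 1 = m" using ti unfolding adjacent_pos_def by auto
          moreover have "t j + 1 \<noteq> m"
          proof
            assume a: "t j + 1 = m"
            have "t j \<in> {1..n}" using permutes_in_image[OF t] jV by blast
            then have m2: "m \<ge> 2" using a by auto
            define k where "k = inv s (m - 1)"
            have "t k = m - 1" using Suc.IH m2 h unfolding k_def by auto
            then have "t k = t j" using a by simp
            then have "k = j" using permutes_inj[OF t] by (simp add: inj_eq)
            then have "m - 1 = Suc m" using sinv unfolding k_def j_def by metis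
            then show False by simp
          qed
          ultimately show ?thesis using m' unfolding j_def by simp
        qed
      qed
    qed
  qed
  show ?thesis
  proof
    fix x
    show "s x = t x"
    proof (cases "x \<in> {1..n}")
      case True
      then have sx: "s x \<in> {1..n}" using permutes_in_image[OF s] by blast
      have "inv s (s x) = x" using s by (simp add: permutes_inverses(2))
      then show ?thesis using key[of "s x"] sx by auto
    next
      case False then show ?thesis using s t by (simp add: permutes_def)
    qed
  qed
qed

lemma fact_le_speed:
  fixes w :: "nat \<Rightarrow> 'a" and A :: "'a set" and E :: "'a \<Rightarrow> 'a \<Rightarrow> bool"
  assumes "finite A"
    and wA: "\<forall>i\<ge>1. w i \<in> A"
    and sym: "\<forall>a b. E a b \<longrightarrow> E b a"
    and n: "n \<ge> 1"
  shows "fact n \<le> speed_P w E n * card A ^ n * n"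
proof -
  define V where "V = {1..n}"
  define S1 where "S1 = {G \<in> graphs_on V. in_P w E V G}"
  define S2 where "S2 = {xs. set xs \<subseteq> A \<and> length xs = n}"
  define F where "F = (\<lambda>s. (pull w E n s, map (w \<circ> s) [1..<n+1], inv s 1))"
  define P where "P = {s. s permutes V}"
  have cardP: "card P = fact n" unfolding P_def V_def by (rule card_permutations) auto
  have finS1: "finite S1"
  proof -
    have "S1 \<subseteq> Pow {{i, j} | i j. i \<in> V \<and> j \<in> V \<and> i \<noteq> j}"
      unfolding S1_def graphs_on_def by auto
    moreover have "finite {{i, j} | i j. i \<in> V \<and> j \<in> V \<and> i \<noteq> j}"
    proof -
      have "{{i, j} | i j. i \<in> V \<and> j \<in> V \<and> i \<noteq> j} \<subseteq> (\<lambda>(i,j). {i,j}) ` (V \<times> V)" by auto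
      then show ?thesis by (rule finite_subset) (simp add: V_def)
    qed
    ultimately show ?thesis by (meson finite_Pow_iff finite_subset)
  qed
  have finS2: "finite S2" unfolding S2_def using assms(1) by (simp add: finite_lists_length_eq)
  have img: "F ` P \<subseteq> S1 \<times> S2 \<times> V"
  proof
    fix y assume "y \<in> F ` P"
    then obtain s where s: "s permutes V" and y: "y = F s" unfolding P_def by auto
    have "pull w E n s \<in> graphs_on V" unfolding graphs_on_def pull_def V_def by blast
    moreover have "in_P w E V (pull w E n s)"
      unfolding in_P_def
    proof (intro exI conjI)
      show "finite V" "0 \<notin> V" unfolding V_def by auto
      show "graph_iso V (pull w E n s) V (GwH_edges w E V)"
        unfolding graph_iso_def using permutes_imp_bij[OF s] pull_mem[OF s[unfolded V_def]]
        unfolding V_def by blast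
    qed
    moreover have "map (w \<circ> s) [1..<n+1] \<in> S2"
    proof -
      have "w (s i) \<in> A" if "i \<in> {1..n}" for i
      proof -
        have "s i \<in> {1..n}" using that permutes_in_image[OF s[unfolded V_def]] by blast
        then show ?thesis using wA by auto
      qed
      then show ?thesis unfolding S2_def by auto
    qed
    moreover have "inv s 1 \<in> V" using n s by (metis atLeastAtMost_iff le_refl permutes_inv permutes_in_image V_def)
    ultimately show "y \<in> S1 \<times> S2 \<times> V" unfolding y F_def S1_def by auto
  qed
  have inj: "inj_on F P"
  proof
    fix s t assume sP: "s \<in> P" and tP: "t \<in> P" and eq: "F s = F t"
    have s: "s permutes {1..n}" and t: "t permutes {1..n}" using sP tP unfolding P_def V_def by auto
    have pe: "pull w E n s = pull w E n t" and me: "map (w \<circ> s) [1..<n+1] = map (w \<circ> t) [1..<n+1]"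
      and one: "inv s 1 = inv t 1" using eq unfolding F_def by auto
    have we: "w (s i) = w (t i)" if "i \<in> {1..n}" for i
    proof -
      have "\<forall>x\<in>set [1..<n+1]. (w \<circ> s) x = (w \<circ> t) x" using me by (simp only: map_eq_conv)
      moreover have "i \<in> set [1..<n+1]" using that by auto
      ultimately show ?thesis by (metis comp_apply)
    qed
    show "s = t"
    proof (rule perm_rigid[OF s t _ one n])
      fix i j assume i: "i \<in> {1..n}" and j: "j \<in> {1..n}"
      show "adjacent_pos (s i) (s j) = adjacent_pos (t i) (t j)"
      proof (cases "i = j")
        case True then show ?thesis by (simp add: adjacent_pos_def)
      next
        case False
        have si: "s i \<in> {1..n}" "s j \<in> {1..n}" "s i \<noteq> s j"
          using permutes_in_image[OF s] i j False permutes_inj[OF s] by (auto simp del: atLeastAtMost_iff simp: inj_eq)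
        have ti: "t i \<in> {1..n}" "t j \<in> {1..n}" "t i \<noteq> t j"
          using permutes_in_image[OF t] i j False permutes_inj[OF t] by (auto simp del: atLeastAtMost_iff simp: inj_eq)
        have "{s i, s j} \<in> GwH_edges w E {1..n} \<longleftrightarrow> {t i, t j} \<in> GwH_edges w E {1..n}"
          using pull_mem[OF s i j False, of w E] pull_mem[OF t i j False, of w E] pe by metis
        then show ?thesis using GwH_mem[OF sym si, where w=w] GwH_mem[OF sym ti, where w=w] we[OF i] we[OF j] by auto
      qed
    qed
  qed
  have "card P \<le> card (S1 \<times> S2 \<times> V)"
    by (rule card_inj_on_le[OF inj img]) (simp add: finS1 finS2 V_def)
  also have "\<dots> = card S1 * card S2 * n" by (simp add: card_cartesian_product V_def)
  also have "card S2 = card A ^ n" unfolding S2_def by (rule card_lists_length_eq) fact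
  also have "card S1 = speed_P w E n" unfolding S1_def speed_P_def V_def by simp
  finally show ?thesis using cardP by simp
qed


theorem proposition3p7:
  fixes w :: "nat \<Rightarrow> 'a" and A :: "'a set" and E :: "'a \<Rightarrow> 'a \<Rightarrow> bool"
  assumes "finite A"
    and "\<forall>i\<ge>1. w i \<in> A"
    and "\<forall>a b. E a b \<longrightarrow> a \<in> A \<and> b \<in> A"
    and "\<forall>a b. E a b \<longrightarrow> E b a"
  shows "above_Bell (speed_P w E)"
  unfolding above_Bell_def
proof (intro allI impI)
  fix \<epsilon> :: real assume ep: "\<epsilon> > 0"
  define k where "k = real (card A)"
  have "w 1 \<in> A" using assms(2) by auto
  then have "card A \<ge> 1" using assms(1) by (metis One_nat_def Suc_leI card_gt_0_iff empty_iff)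
  then have k1: "k \<ge> 1" unfolding k_def by simp
  define D where "D = 2 + ln k"
  have D0: "D \<ge> 2" unfolding D_def using k1 by simp
  define N where "N = nat \<lceil>exp (D / \<epsilon>)\<rceil> + 1"
  show "\<forall>\<^sub>F n in sequentially. real n powr ((1 - \<epsilon>) * real n) \<le> real (speed_P w E n)"
  proof (rule eventually_sequentiallyI[of N])
    fix n assume nN: "N \<le> n"
    have n1: "n \<ge> 1" using nN unfolding N_def by simp
    have npos: "real n > 0" using n1 by simp
    have "exp (D / \<epsilon>) \<le> real n"
    proof -
      have "exp (D / \<epsilon>) \<le> real (nat \<lceil>exp (D / \<epsilon>)\<rceil>)" by linarith
      also have "\<dots> \<le> real n" using nN unfolding N_def by simp
      finally show ?thesis .
    qed
    then have "ln (exp (D / \<epsilon>)) \<le> ln (real n)" using npos by (subst ln_le_cancel_iff) auto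
    then have "D / \<epsilon> \<le> ln (real n)" by simp
    then have Dle: "D \<le> \<epsilon> * ln (real n)" using ep by (simp add: field_simps)
    define sp where "sp = real (speed_P w E n)"
    have f1: "fact n \<le> sp * k ^ n * real n"
    proof -
      have "fact n \<le> speed_P w E n * card A ^ n * n"
        by (rule fact_le_speed[OF assms(1) assms(2) assms(4) n1])
      then have "real (fact n) \<le> real (speed_P w E n * card A ^ n * n)" by (simp only: of_nat_le_iff)
      then show ?thesis unfolding sp_def k_def by simp
    qed
    have f2: "real n ^ n \<le> exp (real n) * fact n"
      using pow_fact_le_exp[of "real n" n] by (simp add: field_simps)
    have f3: "exp (real n) * k ^ n * real n \<le> real n powr (\<epsilon> * real n)"
    proof -
      have kn: "k ^ n = exp (real n * ln k)" using k1 by (simp add: exp_of_nat_mult)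
      have "exp (real n) * k ^ n * real n = exp (real n + real n * ln k + ln (real n))"
        using npos by (simp add: exp_add kn)
      also have "\<dots> \<le> exp (real n * D)"
      proof -
        have "ln (real n) \<le> real n" using ln_le_minus_one[OF npos] by linarith
        then show ?thesis unfolding D_def by (simp add: algebra_simps)
      qed
      also have "\<dots> \<le> exp (\<epsilon> * real n * ln (real n))"
        using Dle n1 by (simp add: mult.commute mult.left_commute mult_left_mono)
      also have "\<dots> = real n powr (\<epsilon> * real n)" using npos by (simp add: powr_def mult.commute)
      finally show ?thesis .
    qed
    have sp0: "sp \<ge> 0" unfolding sp_def by simp
    have "real n ^ n \<le> sp * (exp (real n) * k ^ n * real n)"
    proof -
      have "exp (real n) * fact n \<le> exp (real n) * (sp * k ^ n * real n)"
        by (rule mult_left_mono[OF f1]) simp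
      have e: "exp (real n) * (sp * k ^ n * real n) = sp * (exp (real n) * k ^ n * real n)"
        by (simp add: algebra_simps)
      show ?thesis using order_trans[OF f2 \<open>exp (real n) * fact n \<le> _\<close>] e by simp
    qed
    also have "\<dots> \<le> sp * real n powr (\<epsilon> * real n)" by (rule mult_left_mono[OF f3 sp0])
    finally have main: "real n ^ n \<le> sp * real n powr (\<epsilon> * real n)" .
    have "real n powr ((1 - \<epsilon>) * real n) = real n powr (real n) / real n powr (\<epsilon> * real n)"
      by (simp add: left_diff_distrib powr_diff)
    also have "\<dots> = real n ^ n / real n powr (\<epsilon> * real n)" using npos by (simp add: powr_realpow)
    also have "\<dots> \<le> sp" using main npos by (simp add: divide_le_eq)
    finally show "real n powr ((1 - \<epsilon>) * real n) \<le> real (speed_P w E n)" unfolding sp_def .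
  qed
qed

end
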